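(* Let $d\ge2$, $L\ge1$, $\sigma>0$, $\lambda>0$, let $\mu_0^\star,\mu_1^\star\in\mathbb{S}^{d-1}$ be orthonormal, and let $(X_\ell,Z_\ell)_{1\le\ell\le L}$ be i.i.d. with $Z_\ell\sim\mathrm{Bernoulli}(1/2)$ and $X_\ell\mid Z_\ell\sim\mathcal{N}(\mu_{Z_\ell}^\star,\sigma^2I_d)$. Then for $c\in\{0,1\}$, $$\mathbb{E}[T^{\mathrm{lin},\mu_0^\star,\mu_1^\star}(\mathbb{X})_1\mid Z_1=c]=\mu_c^\star\,\frac{\lambda}{L}\big[(L+1)+2(L+3)\sigma^2\big].$$ In particular, for $\lambda=\frac{L}{(L+1)+2(L+3)\sigma^2}$, $\mathbb{E}[T^{\mathrm{lin},\mu_0^\star,\mu_1^\star}(\mathbb{X})_1\mid Z_1=c]=\mu_c^\star$.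
   Context: $\mathbb{X}\in\mathbb{R}^{L\times d}$ has rows $X_1,\dots,X_L$, and $T^{\mathrm{lin},\mu_0,\mu_1}(\mathbb{X})_\ell=\frac{2}{L}\sum_{k=1}^L\lambda\big[(X_\ell^\top\mu_0\mu_0^\top X_k)+(X_\ell^\top\mu_1\mu_1^\top X_k)\big]X_k$. *)

theory Defs
  imports "HOL-Probability.Probability"
begin

definition gauss_density :: "real^'d \<Rightarrow> real \<Rightarrow> real^'d \<Rightarrow> real" where
  "gauss_density mu \<sigma> x = (\<Prod>i\<in>UNIV. normal_density (mu $ i) \<sigma> (x $ i))"

text \<open>Joint density of (X, Z) w.r.t. lborel times counting measure on bool:
  Z ~ Bernoulli(1/2) (True encodes Z = 1), X | Z ~ N(mu_Z, sigma^2 I_d).\<close>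
definition mix_density :: "real^'d \<Rightarrow> real^'d \<Rightarrow> real \<Rightarrow> (real^'d) \<times> bool \<Rightarrow> ennreal" where
  "mix_density mu0 mu1 \<sigma> p =
     ennreal ((1/2) * gauss_density (if snd p then mu1 else mu0) \<sigma> (fst p))"

text \<open>The linear transformer T^{lin,mu0,mu1}; tokens are indexed 0..L-1,
  so the paper's token 1 is index 0.\<close>
definition T_lin :: "real \<Rightarrow> real^'d \<Rightarrow> real^'d \<Rightarrow> nat \<Rightarrow> (nat \<Rightarrow> real^'d) \<Rightarrow> nat \<Rightarrow> real^'d" where
  "T_lin lam mu0 mu1 L Xs l =
     (2 / real L) *\<^sub>R (\<Sum>k<L. (lam * ((Xs l \<bullet> mu0) * (mu0 \<bullet> Xs k)
                                  + (Xs l \<bullet> mu1) * (mu1 \<bullet> Xs k))) *\<^sub>R Xs k)"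

end

theory Submission
  imports Defs
begin

lemma lborel_vec_prod:
  fixes f :: "'n::finite \<Rightarrow> real \<Rightarrow> real"
  assumes int: "\<And>i. integrable lborel (f i)"
  shows "integrable lborel (\<lambda>x::real^'n. \<Prod>i\<in>UNIV. f i (x $ i))"
    and "(\<integral>x. (\<Prod>i\<in>UNIV. f i (x $ i)) \<partial>(lborel::(real^'n) measure)) = (\<Prod>i\<in>UNIV. integral\<^sup>L lborel (f i))"
proof -
  define e where "e i = (axis i 1 :: real^'n)" for i
  have B: "(Basis :: (real^'n) set) = range e"
    by (auto simp: Basis_vec_def e_def)
  have inj: "inj e" by (auto simp: inj_def e_def axis_eq_axis)
  define g where "g b = f (inv e b)" for b
  have comp: "(\<Sum>b\<in>Basis. y b *\<^sub>R b :: real^'n) $ i = y (e i)" for y i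
  proof -
    have "(\<Sum>b\<in>Basis. y b *\<^sub>R b :: real^'n) $ i = (\<Sum>b\<in>Basis. y b *\<^sub>R b :: real^'n) \<bullet> e i"
      by (simp add: e_def inner_axis)
    also have "\<dots> = y (e i)" using B by (subst inner_sum_left_Basis) auto
    finally show ?thesis .
  qed
  have key: "(\<Prod>i\<in>UNIV. f i ((\<Sum>b\<in>Basis. y b *\<^sub>R b :: real^'n) $ i)) = (\<Prod>b\<in>Basis. g b (y b))" for y
    unfolding comp by (simp add: B g_def prod.reindex[OF inj] inv_f_f[OF inj])
  have meas: "f i \<in> borel_measurable borel" for i using int[of i] by auto
  interpret P: product_sigma_finite "\<lambda>_::real^'n. lborel" by unfold_locales
  have gi: "\<And>b. b \<in> Basis \<Longrightarrow> integrable lborel (g b)" unfolding g_def by (rule int)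
  have intP: "integrable (\<Pi>\<^sub>M b\<in>Basis. lborel) (\<lambda>y. \<Prod>b\<in>Basis. g b (y b))"
    by (rule P.product_integrable_prod) (auto intro: gi)
  have m1: "(\<lambda>f. \<Sum>b\<in>Basis. f b *\<^sub>R b :: real^'n) \<in> measurable (\<Pi>\<^sub>M b\<in>Basis. lborel) borel"
    by measurable
  have m2: "(\<lambda>x::real^'n. \<Prod>i\<in>UNIV. f i (x $ i)) \<in> borel_measurable borel"
    using meas by measurable
  show "integrable lborel (\<lambda>x::real^'n. \<Prod>i\<in>UNIV. f i (x $ i))"
    apply (subst lborel_eq)
    apply (subst integrable_distr_eq[OF m1 m2])
    unfolding key by (rule intP)
  have "(\<integral>x. (\<Prod>i\<in>UNIV. f i (x $ i)) \<partial>(lborel::(real^'n) measure))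
      = (\<integral>y. (\<Prod>b\<in>Basis. g b (y b)) \<partial>(\<Pi>\<^sub>M b\<in>Basis. lborel))"
    apply (subst lborel_eq)
    apply (subst integral_distr[OF m1 m2])
    unfolding key ..
  also have "\<dots> = (\<Prod>b\<in>Basis. integral\<^sup>L lborel (g b))"
    by (rule P.product_integral_prod) (auto intro: gi)
  also have "\<dots> = (\<Prod>i\<in>UNIV. integral\<^sup>L lborel (f i))"
    unfolding B g_def by (subst prod.reindex[OF inj]) (simp add: inv_f_f[OF inj])
  finally show "(\<integral>x. (\<Prod>i\<in>UNIV. f i (x $ i)) \<partial>(lborel::(real^'n) measure)) = (\<Prod>i\<in>UNIV. integral\<^sup>L lborel (f i))" .
qed

lemma normal_int_pow:
  assumes s: "0 < \<sigma>"
  shows "integrable lborel (\<lambda>t. normal_density m \<sigma> t * t ^ k)"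
proof -
  have eq: "(\<lambda>t. normal_density m \<sigma> t * t ^ k) =
     (\<lambda>t. \<Sum>j\<le>k. of_nat (k choose j) * m ^ (k - j) * (normal_density m \<sigma> t * (t - m) ^ j))"
  proof
    fix t
    have "t ^ k = ((t - m) + m) ^ k" by simp
    also have "\<dots> = (\<Sum>j\<le>k. of_nat (k choose j) * (t - m) ^ j * m ^ (k - j))"
      by (rule binomial_ring)
    finally show "normal_density m \<sigma> t * t ^ k =
      (\<Sum>j\<le>k. of_nat (k choose j) * m ^ (k - j) * (normal_density m \<sigma> t * (t - m) ^ j))"
      by (simp add: sum_distrib_left algebra_simps)
  qed
  show ?thesis unfolding eq
    apply (rule Bochner_Integration.integrable_sum)
    apply (rule integrable_mult_right)
    apply (rule integrable_normal_moment[OF s])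
    done
qed

lemma normal_mom:
  assumes s: "0 < \<sigma>"
  shows "(\<integral>t. normal_density m \<sigma> t * t ^ 0 \<partial>lborel) = 1"
    and "(\<integral>t. normal_density m \<sigma> t * t ^ 1 \<partial>lborel) = m"
    and "(\<integral>t. normal_density m \<sigma> t * t ^ 2 \<partial>lborel) = m^2 + \<sigma>^2"
    and "(\<integral>t. normal_density m \<sigma> t * t ^ 3 \<partial>lborel) = m^3 + 3 * m * \<sigma>^2"
proof -
  note I = integrable_normal_moment[OF s, of m]
  have c0: "(\<integral>t. normal_density m \<sigma> t * (t - m) ^ 0 \<partial>lborel) = 1" using s by simp
  have c1: "(\<integral>t. normal_density m \<sigma> t * (t - m) ^ 1 \<partial>lborel) = 0"
    using integral_normal_moment_odd[OF s, of m 0] by simp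
  have c2: "(\<integral>t. normal_density m \<sigma> t * (t - m) ^ 2 \<partial>lborel) = \<sigma>^2"
  proof -
    have h: "(\<integral>t. normal_density m \<sigma> t * (t - m) ^ (2*1) \<partial>lborel) = fact (2*1) / ((2/\<sigma>\<^sup>2)^1 * fact 1)"
      by (rule integral_normal_moment_even[OF s])
    have r: "fact (2*1) / ((2/\<sigma>\<^sup>2)^1 * fact 1) = (\<sigma>\<^sup>2::real)" using s by (simp add: field_simps)
    show ?thesis using h unfolding r by (simp only: mult_1_right)
  qed
  have c3: "(\<integral>t. normal_density m \<sigma> t * (t - m) ^ 3 \<partial>lborel) = 0"
    using integral_normal_moment_odd[OF s, of m 1] by (simp add: numeral_3_eq_3)
  have hb: "\<And>k v. integral\<^sup>L lborel (\<lambda>t. normal_density m \<sigma> t * (t - m) ^ k) = v \<Longrightarrow>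
     has_bochner_integral lborel (\<lambda>t. normal_density m \<sigma> t * (t - m) ^ k) v"
    using I by (simp add: has_bochner_integral_iff)
  note h0 = hb[OF c0] and h1 = hb[OF c1] and h2 = hb[OF c2] and h3 = hb[OF c3]
  show "(\<integral>t. normal_density m \<sigma> t * t ^ 0 \<partial>lborel) = 1" using c0 by simp
  have "has_bochner_integral lborel (\<lambda>t. normal_density m \<sigma> t * (t - m) ^ 1 + m * (normal_density m \<sigma> t * (t - m) ^ 0)) (0 + m * 1)"
    by (intro has_bochner_integral_add has_bochner_integral_mult_right h0 h1)
  moreover have "(\<lambda>t. normal_density m \<sigma> t * t ^ 1) = (\<lambda>t. normal_density m \<sigma> t * (t - m) ^ 1 + m * (normal_density m \<sigma> t * (t - m) ^ 0))"
    by (simp add: algebra_simps)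
  ultimately show "(\<integral>t. normal_density m \<sigma> t * t ^ 1 \<partial>lborel) = m"
    by (simp add: has_bochner_integral_iff)
  have "has_bochner_integral lborel (\<lambda>t. normal_density m \<sigma> t * (t - m) ^ 2 + (2*m) * (normal_density m \<sigma> t * (t - m) ^ 1)
     + m^2 * (normal_density m \<sigma> t * (t - m) ^ 0)) (\<sigma>^2 + (2*m) * 0 + m^2 * 1)"
    by (intro has_bochner_integral_add has_bochner_integral_mult_right h0 h1 h2)
  moreover have "(\<lambda>t. normal_density m \<sigma> t * t ^ 2) = (\<lambda>t. normal_density m \<sigma> t * (t - m) ^ 2 + (2*m) * (normal_density m \<sigma> t * (t - m) ^ 1)
     + m^2 * (normal_density m \<sigma> t * (t - m) ^ 0))"
    by (simp add: algebra_simps power2_eq_square)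
  ultimately show "(\<integral>t. normal_density m \<sigma> t * t ^ 2 \<partial>lborel) = m^2 + \<sigma>^2"
    by (simp add: has_bochner_integral_iff)
  have "has_bochner_integral lborel (\<lambda>t. normal_density m \<sigma> t * (t - m) ^ 3 + (3*m) * (normal_density m \<sigma> t * (t - m) ^ 2)
     + (3*m^2) * (normal_density m \<sigma> t * (t - m) ^ 1) + m^3 * (normal_density m \<sigma> t * (t - m) ^ 0))
     (0 + (3*m) * \<sigma>^2 + (3*m^2) * 0 + m^3 * 1)"
    by (intro has_bochner_integral_add has_bochner_integral_mult_right h0 h1 h2 h3)
  moreover have "(\<lambda>t. normal_density m \<sigma> t * t ^ 3) = (\<lambda>t. normal_density m \<sigma> t * (t - m) ^ 3 + (3*m) * (normal_density m \<sigma> t * (t - m) ^ 2)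
     + (3*m^2) * (normal_density m \<sigma> t * (t - m) ^ 1) + m^3 * (normal_density m \<sigma> t * (t - m) ^ 0))"
    by (simp add: algebra_simps power2_eq_square power3_eq_cube)
  ultimately show "(\<integral>t. normal_density m \<sigma> t * t ^ 3 \<partial>lborel) = m^3 + 3 * m * \<sigma>^2"
    by (simp add: has_bochner_integral_iff)
qed

definition mom :: "real \<Rightarrow> real \<Rightarrow> nat \<Rightarrow> real" where
  "mom \<sigma> m k = (\<integral>t. normal_density m \<sigma> t * t ^ k \<partial>lborel)"

lemma mom_vals: assumes "0 < \<sigma>" shows "mom \<sigma> m 0 = 1" "mom \<sigma> m 1 = m" "mom \<sigma> m 2 = m^2 + \<sigma>^2"
  "mom \<sigma> m 3 = m^3 + 3 * m * \<sigma>^2"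
  unfolding mom_def using normal_mom[OF assms] by simp_all

lemma mom_Suc0: assumes "0 < \<sigma>" shows "mom \<sigma> m (Suc 0) = m" "mom \<sigma> m (Suc (Suc 0)) = m^2 + \<sigma>^2"
  "mom \<sigma> m (Suc (Suc (Suc 0))) = m^3 + 3 * m * \<sigma>^2"
  using mom_vals[OF assms] by (simp_all add: numeral_2_eq_2 numeral_3_eq_3)

lemma gauss_mono:
  fixes \<mu> :: "real^'d" and n :: "'d \<Rightarrow> nat"
  assumes s: "0 < \<sigma>"
  shows "integrable lborel (\<lambda>x. gauss_density \<mu> \<sigma> x * (\<Prod>i\<in>UNIV. (x$i)^(n i)))"
    and "(\<integral>x. gauss_density \<mu> \<sigma> x * (\<Prod>i\<in>UNIV. (x$i)^(n i)) \<partial>lborel)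
          = (\<Prod>i\<in>UNIV. mom \<sigma> (\<mu>$i) (n i))"
proof -
  have eq: "(\<lambda>x. gauss_density \<mu> \<sigma> x * (\<Prod>i\<in>UNIV. (x$i)^(n i))) =
     (\<lambda>x::real^'d. \<Prod>i\<in>UNIV. (\<lambda>i t. normal_density (\<mu>$i) \<sigma> t * t ^ (n i)) i (x $ i))"
    by (simp add: gauss_density_def prod.distrib)
  have I: "\<And>i. integrable lborel ((\<lambda>i t. normal_density (\<mu>$i) \<sigma> t * t ^ (n i)) i)"
    using normal_int_pow[OF s] by simp
  show "integrable lborel (\<lambda>x. gauss_density \<mu> \<sigma> x * (\<Prod>i\<in>UNIV. (x$i)^(n i)))"
    unfolding eq by (rule lborel_vec_prod(1)[OF I])
  show "(\<integral>x. gauss_density \<mu> \<sigma> x * (\<Prod>i\<in>UNIV. (x$i)^(n i)) \<partial>lborel)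
          = (\<Prod>i\<in>UNIV. mom \<sigma> (\<mu>$i) (n i))"
    unfolding eq mom_def by (rule lborel_vec_prod(2)[OF I])
qed

lemma prod_pow_ind:
  fixes x :: "real^'d"
  shows "(\<Prod>i\<in>UNIV. (x$i)^(if i = a then 1 else 0)) = x$a"
proof -
  have "\<And>i. (x$i)^(if i = a then 1 else 0) = (if i = a then x$i else 1)" by simp
  then show ?thesis by simp
qed

lemma prod_out:
  fixes h :: "'d::finite \<Rightarrow> real"
  assumes "\<And>i. i \<notin> S \<Longrightarrow> h i = 1"
  shows "(\<Prod>i\<in>UNIV. h i) = (\<Prod>i\<in>S. h i)"
  using assms by (intro prod.mono_neutral_right) auto

context fixes \<sigma> :: real and \<mu> :: "real^'d" assumes s: "0 < \<sigma>"
begin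

lemma G0: "integrable lborel (gauss_density \<mu> \<sigma>)" "integral\<^sup>L lborel (gauss_density \<mu> \<sigma>) = 1"
  using gauss_mono[OF s, of \<mu> "\<lambda>_. 0"] mom_vals(1)[OF s] by simp_all

lemma G1: "integrable lborel (\<lambda>x. gauss_density \<mu> \<sigma> x * x$a)"
   "(\<integral>x. gauss_density \<mu> \<sigma> x * x$a \<partial>lborel) = \<mu>$a"
proof -
  define n where "n i = (if i = a then 1 else (0::nat))" for i
  have e: "(\<Prod>i\<in>UNIV. (x$i)^(n i)) = x$a" for x :: "real^'d"
    unfolding n_def by (rule prod_pow_ind)
  show "integrable lborel (\<lambda>x. gauss_density \<mu> \<sigma> x * x$a)"
    using gauss_mono(1)[OF s, of \<mu> n] by (simp add: e)
  have "(\<Prod>i\<in>UNIV. mom \<sigma> (\<mu>$i) (n i))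
      = (\<Prod>i\<in>{a}. mom \<sigma> (\<mu>$i) (n i))"
    by (rule prod_out) (simp add: n_def mom_vals[OF s])
  also have "\<dots> = \<mu>$a" by (simp add: n_def mom_vals[OF s] mom_Suc0[OF s])
  finally show "(\<integral>x. gauss_density \<mu> \<sigma> x * x$a \<partial>lborel) = \<mu>$a"
    using gauss_mono(2)[OF s, of \<mu> n] by (simp add: e)
qed

lemma G2: "integrable lborel (\<lambda>x. gauss_density \<mu> \<sigma> x * (x$a * x$b))"
   "(\<integral>x. gauss_density \<mu> \<sigma> x * (x$a * x$b) \<partial>lborel) = \<mu>$a * \<mu>$b + (if a = b then \<sigma>^2 else 0)"
proof -
  define n where "n i = (if i = a then 1 else (0::nat)) + (if i = b then 1 else 0)" for i
  have e: "(\<Prod>i\<in>UNIV. (x$i)^(n i)) = x$a * x$b" for x :: "real^'d"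
    unfolding n_def power_add prod.distrib prod_pow_ind ..
  show "integrable lborel (\<lambda>x. gauss_density \<mu> \<sigma> x * (x$a * x$b))"
    using gauss_mono(1)[OF s, of \<mu> n] by (simp add: e)
  have "(\<Prod>i\<in>UNIV. mom \<sigma> (\<mu>$i) (n i))
      = (\<Prod>i\<in>{a,b}. mom \<sigma> (\<mu>$i) (n i))"
    by (rule prod_out) (simp add: n_def mom_vals[OF s])
  also have "\<dots> = \<mu>$a * \<mu>$b + (if a = b then \<sigma>^2 else 0)"
    by (cases "a = b") (simp_all add: n_def mom_vals[OF s] mom_Suc0[OF s] power2_eq_square)
  finally show "(\<integral>x. gauss_density \<mu> \<sigma> x * (x$a * x$b) \<partial>lborel) = \<mu>$a * \<mu>$b + (if a = b then \<sigma>^2 else 0)"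
    using gauss_mono(2)[OF s, of \<mu> n] by (simp add: e)
qed

lemma G3: "integrable lborel (\<lambda>x. gauss_density \<mu> \<sigma> x * (x$a * x$b * x$c))"
   "(\<integral>x. gauss_density \<mu> \<sigma> x * (x$a * x$b * x$c) \<partial>lborel) = \<mu>$a * \<mu>$b * \<mu>$c
      + \<sigma>^2 * ((if a = b then \<mu>$c else 0) + (if a = c then \<mu>$b else 0) + (if b = c then \<mu>$a else 0))"
proof -
  define n where "n i = (if i = a then 1 else (0::nat)) + (if i = b then 1 else 0) + (if i = c then 1 else 0)" for i
  have e: "(\<Prod>i\<in>UNIV. (x$i)^(n i)) = x$a * x$b * x$c" for x :: "real^'d"
    unfolding n_def power_add prod.distrib prod_pow_ind ..
  show "integrable lborel (\<lambda>x. gauss_density \<mu> \<sigma> x * (x$a * x$b * x$c))"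
    using gauss_mono(1)[OF s, of \<mu> n] by (simp add: e)
  have "(\<Prod>i\<in>UNIV. mom \<sigma> (\<mu>$i) (n i))
      = (\<Prod>i\<in>{a,b,c}. mom \<sigma> (\<mu>$i) (n i))"
    by (rule prod_out) (simp add: n_def mom_vals[OF s])
  also have "\<dots> = \<mu>$a * \<mu>$b * \<mu>$c
      + \<sigma>^2 * ((if a = b then \<mu>$c else 0) + (if a = c then \<mu>$b else 0) + (if b = c then \<mu>$a else 0))"
    by (cases "a = b"; cases "a = c"; cases "b = c")
       (simp_all add: n_def mom_vals[OF s] mom_Suc0[OF s] power2_eq_square power3_eq_cube numeral_3_eq_3 algebra_simps insert_commute)
  finally show "(\<integral>x. gauss_density \<mu> \<sigma> x * (x$a * x$b * x$c) \<partial>lborel) = \<mu>$a * \<mu>$b * \<mu>$c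
      + \<sigma>^2 * ((if a = b then \<mu>$c else 0) + (if a = c then \<mu>$b else 0) + (if b = c then \<mu>$a else 0))"
    using gauss_mono(2)[OF s, of \<mu> n] by (simp add: e)
qed

end

lemma int_sum_c:
  fixes f :: "'i \<Rightarrow> 'a \<Rightarrow> real"
  assumes "\<And>a. integrable M (f a)"
  shows "integrable M (\<lambda>x. \<Sum>a\<in>A. c a * f a x)" "(\<integral>x. (\<Sum>a\<in>A. c a * f a x) \<partial>M) = (\<Sum>a\<in>A. c a * integral\<^sup>L M (f a))"
proof -
  have i: "\<And>a. integrable M (\<lambda>x. c a * f a x)" using assms by (intro integrable_mult_right) 
  show "integrable M (\<lambda>x. \<Sum>a\<in>A. c a * f a x)" by (rule Bochner_Integration.integrable_sum[OF i])
  have "(\<integral>x. (\<Sum>a\<in>A. c a * f a x) \<partial>M) = (\<Sum>a\<in>A. \<integral>x. c a * f a x \<partial>M)"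
    by (rule Bochner_Integration.integral_sum[OF i])
  then show "(\<integral>x. (\<Sum>a\<in>A. c a * f a x) \<partial>M) = (\<Sum>a\<in>A. c a * integral\<^sup>L M (f a))" by simp
qed

lemma ml: "(c::real) * (if P then x else 0) = (if P then c*x else 0)" by simp
lemma mr: "(if P then x else 0) * (c::real) = (if P then x*c else 0)" by simp
lemma sum_if_const: "(\<Sum>b\<in>A. if P then f b else (0::real)) = (if P then (\<Sum>b\<in>A. f b) else 0)" by simp

lemma inner_vec_sum: "(x::real^'d) \<bullet> u = (\<Sum>a\<in>UNIV. u$a * x$a)"
  by (simp add: inner_vec_def mult.commute)

context fixes \<sigma> :: real and \<mu> :: "real^'d" assumes s: "0 < \<sigma>"
begin

lemma V1: "integrable lborel (\<lambda>x. gauss_density \<mu> \<sigma> x * (x \<bullet> u))"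
  "(\<integral>x. gauss_density \<mu> \<sigma> x * (x \<bullet> u) \<partial>lborel) = \<mu> \<bullet> u"
proof -
  have e: "(\<lambda>x. gauss_density \<mu> \<sigma> x * (x \<bullet> u)) = (\<lambda>x. \<Sum>a\<in>UNIV. u$a * (gauss_density \<mu> \<sigma> x * x$a))"
    by (simp add: inner_vec_sum sum_distrib_left algebra_simps)
  show "integrable lborel (\<lambda>x. gauss_density \<mu> \<sigma> x * (x \<bullet> u))"
    unfolding e by (rule int_sum_c(1)[OF G1(1)[OF s]])
  show "(\<integral>x. gauss_density \<mu> \<sigma> x * (x \<bullet> u) \<partial>lborel) = \<mu> \<bullet> u"
    unfolding e int_sum_c(2)[OF G1(1)[OF s]] G1(2)[OF s] by (simp add: inner_vec_sum)
qed

lemma V2: "integrable lborel (\<lambda>x. gauss_density \<mu> \<sigma> x * ((x \<bullet> u) * x$i))"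
  "(\<integral>x. gauss_density \<mu> \<sigma> x * ((x \<bullet> u) * x$i) \<partial>lborel) = (\<mu> \<bullet> u) * \<mu>$i + \<sigma>^2 * u$i"
proof -
  have e: "(\<lambda>x. gauss_density \<mu> \<sigma> x * ((x \<bullet> u) * x$i)) = (\<lambda>x. \<Sum>a\<in>UNIV. u$a * (gauss_density \<mu> \<sigma> x * (x$a * x$i)))"
    by (simp add: inner_vec_sum sum_distrib_left sum_distrib_right algebra_simps)
  show "integrable lborel (\<lambda>x. gauss_density \<mu> \<sigma> x * ((x \<bullet> u) * x$i))"
    unfolding e by (rule int_sum_c(1)[OF G2(1)[OF s]])
  have "(\<integral>x. gauss_density \<mu> \<sigma> x * ((x \<bullet> u) * x$i) \<partial>lborel)
     = (\<Sum>a\<in>UNIV. u$a * (\<mu>$a * \<mu>$i + (if a = i then \<sigma>^2 else 0)))"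
    unfolding e int_sum_c(2)[OF G2(1)[OF s]] G2(2)[OF s] ..
  also have "\<dots> = (\<Sum>a\<in>UNIV. u$a * \<mu>$a) * \<mu>$i + \<sigma>^2 * u$i"
    by (simp add: ring_distribs ml mr sum.distrib sum_distrib_right sum_distrib_left mult_ac)
  also have "\<dots> = (\<mu> \<bullet> u) * \<mu>$i + \<sigma>^2 * u$i"
    by (simp add: inner_vec_sum)
  finally show "(\<integral>x. gauss_density \<mu> \<sigma> x * ((x \<bullet> u) * x$i) \<partial>lborel) = (\<mu> \<bullet> u) * \<mu>$i + \<sigma>^2 * u$i" .
qed

lemma V3: "integrable lborel (\<lambda>x. gauss_density \<mu> \<sigma> x * ((x \<bullet> u)^2 * x$i))"
  "(\<integral>x. gauss_density \<mu> \<sigma> x * ((x \<bullet> u)^2 * x$i) \<partial>lborel)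
     = (\<mu> \<bullet> u)^2 * \<mu>$i + \<sigma>^2 * ((u \<bullet> u) * \<mu>$i + 2 * (\<mu> \<bullet> u) * u$i)"
proof -
  have e: "(\<lambda>x. gauss_density \<mu> \<sigma> x * ((x \<bullet> u)^2 * x$i)) =
     (\<lambda>x. \<Sum>a\<in>UNIV. u$a * (\<Sum>b\<in>UNIV. u$b * (gauss_density \<mu> \<sigma> x * (x$a * x$b * x$i))))"
    by (simp add: inner_vec_sum power2_eq_square sum_distrib_left sum_distrib_right algebra_simps)
  show "integrable lborel (\<lambda>x. gauss_density \<mu> \<sigma> x * ((x \<bullet> u)^2 * x$i))"
    unfolding e by (rule int_sum_c(1)[OF int_sum_c(1)[OF G3(1)[OF s]]])
  have "(\<integral>x. gauss_density \<mu> \<sigma> x * ((x \<bullet> u)^2 * x$i) \<partial>lborel)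
     = (\<Sum>a\<in>UNIV. u$a * (\<Sum>b\<in>UNIV. u$b * (\<mu>$a * \<mu>$b * \<mu>$i
      + \<sigma>^2 * ((if a = b then \<mu>$i else 0) + (if a = i then \<mu>$b else 0) + (if b = i then \<mu>$a else 0)))))"
    unfolding e int_sum_c(2)[OF int_sum_c(1)[OF G3(1)[OF s]]] int_sum_c(2)[OF G3(1)[OF s]] G3(2)[OF s] ..
  also have "\<dots> = (\<Sum>a\<in>UNIV. u$a * \<mu>$a) * (\<Sum>b\<in>UNIV. u$b * \<mu>$b) * \<mu>$i
      + \<sigma>^2 * ((\<Sum>a\<in>UNIV. u$a * u$a) * \<mu>$i + u$i * (\<Sum>b\<in>UNIV. u$b * \<mu>$b) + u$i * (\<Sum>a\<in>UNIV. u$a * \<mu>$a))"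
    by (simp add: ring_distribs ml mr sum.distrib sum_distrib_right sum_distrib_left sum_if_const mult_ac)
  also have "\<dots> = (\<mu> \<bullet> u)^2 * \<mu>$i + \<sigma>^2 * ((u \<bullet> u) * \<mu>$i + 2 * (\<mu> \<bullet> u) * u$i)"
    by (simp add: inner_vec_sum power2_eq_square algebra_simps)
  finally show "(\<integral>x. gauss_density \<mu> \<sigma> x * ((x \<bullet> u)^2 * x$i) \<partial>lborel)
     = (\<mu> \<bullet> u)^2 * \<mu>$i + \<sigma>^2 * ((u \<bullet> u) * \<mu>$i + 2 * (\<mu> \<bullet> u) * u$i)" .
qed

end

lemma N_int:
  fixes G0 G1 :: "'a::euclidean_space \<Rightarrow> real"
  assumes i0: "integrable lborel G0" and i1: "integrable lborel G1"
  shows "integrable (lborel \<Otimes>\<^sub>M count_space UNIV) (\<lambda>p. if snd p then G1 (fst p) else G0 (fst p))"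
    and "integral\<^sup>L (lborel \<Otimes>\<^sub>M count_space UNIV) (\<lambda>p. if snd p then G1 (fst p) else G0 (fst p))
          = integral\<^sup>L lborel G0 + integral\<^sup>L lborel G1"
proof -
  interpret C: sigma_finite_measure "count_space (UNIV::bool set)"
    by (rule sigma_finite_measure_count_space_countable) simp
  interpret P: pair_sigma_finite "lborel::'a measure" "count_space (UNIV::bool set)"
    by unfold_locales
  have m0[measurable]: "G0 \<in> borel_measurable borel" using i0 by auto
  have m1[measurable]: "G1 \<in> borel_measurable borel" using i1 by auto
  define H where "H p = (if snd p then G1 (fst p) else G0 (fst p))" for p :: "'a \<times> bool"
  have mH[measurable]: "H \<in> borel_measurable (lborel \<Otimes>\<^sub>M count_space UNIV)"
    unfolding H_def by measurable
  have "(\<integral>\<^sup>+p. ennreal (norm (H p)) \<partial>(lborel \<Otimes>\<^sub>M count_space UNIV))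
      = (\<integral>\<^sup>+x. (\<integral>\<^sup>+z. ennreal (norm (H (x, z))) \<partial>count_space UNIV) \<partial>lborel)"
    by (rule C.nn_integral_fst[symmetric]) measurable
  also have "\<dots> = (\<integral>\<^sup>+x. ennreal (norm (G0 x)) + ennreal (norm (G1 x)) \<partial>lborel)"
    by (simp add: nn_integral_count_space_finite UNIV_bool H_def add.commute)
  also have "\<dots> = (\<integral>\<^sup>+x. ennreal (norm (G0 x)) \<partial>lborel) + (\<integral>\<^sup>+x. ennreal (norm (G1 x)) \<partial>lborel)"
    by (rule nn_integral_add) auto
  also have "\<dots> < \<infinity>"
    using i0 i1 unfolding integrable_iff_bounded by simp
  finally have iH: "integrable (lborel \<Otimes>\<^sub>M count_space UNIV) H"
    unfolding integrable_iff_bounded using mH by simp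
  then show "integrable (lborel \<Otimes>\<^sub>M count_space UNIV) (\<lambda>p. if snd p then G1 (fst p) else G0 (fst p))"
    unfolding H_def .
  have "integral\<^sup>L (lborel \<Otimes>\<^sub>M count_space UNIV) H = (\<integral>x. (\<integral>z. H (x, z) \<partial>count_space UNIV) \<partial>lborel)"
    by (rule P.integral_fst'[OF iH, symmetric])
  also have "\<dots> = (\<integral>x. G0 x + G1 x \<partial>lborel)"
    by (simp add: lebesgue_integral_count_space_finite UNIV_bool H_def add.commute)
  also have "\<dots> = integral\<^sup>L lborel G0 + integral\<^sup>L lborel G1"
    by (rule Bochner_Integration.integral_add[OF i0 i1])
  finally show "integral\<^sup>L (lborel \<Otimes>\<^sub>M count_space UNIV) (\<lambda>p. if snd p then G1 (fst p) else G0 (fst p))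
          = integral\<^sup>L lborel G0 + integral\<^sup>L lborel G1"
    unfolding H_def .
qed

lemma gauss_density_nonneg: "0 \<le> gauss_density mu \<sigma> x"
  unfolding gauss_density_def by (intro prod_nonneg) auto

lemma gauss_density_meas[measurable]: "gauss_density mu \<sigma> \<in> borel_measurable (borel :: (real^'d) measure)"
  unfolding gauss_density_def by measurable

lemma EXP:
  fixes X :: "'a \<Rightarrow> real^'d" and Z :: "'a \<Rightarrow> bool"
  assumes D: "distributed M (lborel \<Otimes>\<^sub>M count_space UNIV) (\<lambda>\<omega>. (X \<omega>, Z \<omega>)) (mix_density mu0 mu1 \<sigma>)"
    and mF0[measurable]: "F0 \<in> borel_measurable borel" and mF1[measurable]: "F1 \<in> borel_measurable borel"
    and i0: "integrable lborel (\<lambda>x. gauss_density mu0 \<sigma> x * F0 x)"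
    and i1: "integrable lborel (\<lambda>x. gauss_density mu1 \<sigma> x * F1 x)"
  shows "integrable M (\<lambda>\<omega>. if Z \<omega> then F1 (X \<omega>) else F0 (X \<omega>))"
    and "(\<integral>\<omega>. (if Z \<omega> then F1 (X \<omega>) else F0 (X \<omega>)) \<partial>M)
          = 1/2 * (\<integral>x. gauss_density mu0 \<sigma> x * F0 x \<partial>lborel) + 1/2 * (\<integral>x. gauss_density mu1 \<sigma> x * F1 x \<partial>lborel)"
proof -
  define N where "N = (lborel \<Otimes>\<^sub>M count_space UNIV :: ((real^'d) \<times> bool) measure)"
  define Y where "Y = (\<lambda>\<omega>. (X \<omega>, Z \<omega>))"
  define H where "H p = (if snd p then F1 (fst p) else F0 (fst p))" for p :: "(real^'d) \<times> bool"
  define f where "f p = 1/2 * gauss_density (if snd p then mu1 else mu0) \<sigma> (fst p)" for p :: "(real^'d) \<times> bool"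
  have md: "mix_density mu0 mu1 \<sigma> = (\<lambda>p. ennreal (f p))"
    by (simp add: fun_eq_iff mix_density_def f_def)
  have D': "distributed M N Y (\<lambda>p. ennreal (f p))" using D unfolding md N_def Y_def .
  have mY: "Y \<in> measurable M N" using distributed_measurable[OF D'] .
  have mH[measurable]: "H \<in> borel_measurable N" unfolding H_def N_def by measurable
  have mf[measurable]: "f \<in> borel_measurable N" unfolding f_def N_def by measurable
  have fnn: "AE p in N. 0 \<le> f p" by (simp add: f_def gauss_density_nonneg)
  have dd: "distr M N Y = density N (\<lambda>p. ennreal (f p))"
    using distributed_distr_eq_density[OF D'] .
  have fH: "(\<lambda>p. f p *\<^sub>R H p) = (\<lambda>p. if snd p then (\<lambda>x. 1/2 * (gauss_density mu1 \<sigma> x * F1 x)) (fst p)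
                                   else (\<lambda>x. 1/2 * (gauss_density mu0 \<sigma> x * F0 x)) (fst p))"
    by (auto simp: fun_eq_iff f_def H_def)
  have j0: "integrable lborel (\<lambda>x. 1/2 * (gauss_density mu0 \<sigma> x * F0 x))" using i0 by simp
  have j1: "integrable lborel (\<lambda>x. 1/2 * (gauss_density mu1 \<sigma> x * F1 x))" using i1 by simp
  have iN: "integrable N (\<lambda>p. f p *\<^sub>R H p)"
    unfolding fH N_def by (rule N_int(1)[OF j0 j1])
  have "integrable (distr M N Y) H"
    unfolding dd by (subst integrable_density[OF mH mf fnn]) (rule iN)
  then have "integrable M (\<lambda>\<omega>. H (Y \<omega>))"
    by (subst (asm) integrable_distr_eq[OF mY mH])
  then show "integrable M (\<lambda>\<omega>. if Z \<omega> then F1 (X \<omega>) else F0 (X \<omega>))"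
    unfolding H_def Y_def fst_conv snd_conv .
  have "(\<integral>\<omega>. H (Y \<omega>) \<partial>M) = integral\<^sup>L (distr M N Y) H"
    by (rule integral_distr[OF mY mH, symmetric])
  also have "\<dots> = integral\<^sup>L N (\<lambda>p. f p *\<^sub>R H p)"
    unfolding dd by (rule integral_density[OF mH mf fnn])
  also have "\<dots> = 1/2 * (\<integral>x. gauss_density mu0 \<sigma> x * F0 x \<partial>lborel) + 1/2 * (\<integral>x. gauss_density mu1 \<sigma> x * F1 x \<partial>lborel)"
    unfolding fH N_def N_int(2)[OF j0 j1] by simp
  finally show "(\<integral>\<omega>. (if Z \<omega> then F1 (X \<omega>) else F0 (X \<omega>)) \<partial>M)
          = 1/2 * (\<integral>x. gauss_density mu0 \<sigma> x * F0 x \<partial>lborel) + 1/2 * (\<integral>x. gauss_density mu1 \<sigma> x * F1 x \<partial>lborel)"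
    by (simp add: H_def Y_def cong: if_cong)
qed

lemma EXPc:
  fixes X :: "'a \<Rightarrow> real^'d" and Z :: "'a \<Rightarrow> bool"
  assumes D: "distributed M (lborel \<Otimes>\<^sub>M count_space UNIV) (\<lambda>\<omega>. (X \<omega>, Z \<omega>)) (mix_density mu0 mu1 \<sigma>)"
    and mF[measurable]: "F \<in> borel_measurable borel"
    and i0: "integrable lborel (\<lambda>x. gauss_density mu0 \<sigma> x * F x)"
    and i1: "integrable lborel (\<lambda>x. gauss_density mu1 \<sigma> x * F x)"
  shows "integrable M (\<lambda>\<omega>. (if Z \<omega> = c then 1 else 0) * F (X \<omega>))"
    and "(\<integral>\<omega>. (if Z \<omega> = c then 1 else 0) * F (X \<omega>) \<partial>M)
          = 1/2 * (\<integral>x. gauss_density (if c then mu1 else mu0) \<sigma> x * F x \<partial>lborel)"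
    and "integrable M (\<lambda>\<omega>. F (X \<omega>))"
    and "(\<integral>\<omega>. F (X \<omega>) \<partial>M)
          = 1/2 * (\<integral>x. gauss_density mu0 \<sigma> x * F x \<partial>lborel) + 1/2 * (\<integral>x. gauss_density mu1 \<sigma> x * F x \<partial>lborel)"
proof -
  define a0 where "a0 = (if c then 0 else 1::real)"
  define a1 where "a1 = (if c then 1 else 0::real)"
  have e: "(\<lambda>\<omega>. (if Z \<omega> = c then 1 else 0) * F (X \<omega>)) = (\<lambda>\<omega>. if Z \<omega> then (\<lambda>x. a1 * F x) (X \<omega>) else (\<lambda>x. a0 * F x) (X \<omega>))"
    by (auto simp: fun_eq_iff a0_def a1_def)
  have j0: "integrable lborel (\<lambda>x. gauss_density mu0 \<sigma> x * (a0 * F x))"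
    using i0 by (simp add: algebra_simps)
  have j1: "integrable lborel (\<lambda>x. gauss_density mu1 \<sigma> x * (a1 * F x))"
    using i1 by (simp add: algebra_simps)
  show "integrable M (\<lambda>\<omega>. (if Z \<omega> = c then 1 else 0) * F (X \<omega>))"
    unfolding e by (rule EXP(1)[OF D _ _ j0 j1]) measurable
  have "(\<integral>\<omega>. (if Z \<omega> = c then 1 else 0) * F (X \<omega>) \<partial>M)
     = 1/2 * (\<integral>x. gauss_density mu0 \<sigma> x * (a0 * F x) \<partial>lborel) + 1/2 * (\<integral>x. gauss_density mu1 \<sigma> x * (a1 * F x) \<partial>lborel)"
    unfolding e by (rule EXP(2)[OF D _ _ j0 j1]) measurable
  also have "\<dots> = 1/2 * (\<integral>x. gauss_density (if c then mu1 else mu0) \<sigma> x * F x \<partial>lborel)"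
    by (cases c) (simp_all add: a0_def a1_def)
  finally show "(\<integral>\<omega>. (if Z \<omega> = c then 1 else 0) * F (X \<omega>) \<partial>M)
          = 1/2 * (\<integral>x. gauss_density (if c then mu1 else mu0) \<sigma> x * F x \<partial>lborel)" .
  have e2: "(\<lambda>\<omega>. F (X \<omega>)) = (\<lambda>\<omega>. if Z \<omega> then F (X \<omega>) else F (X \<omega>))" by simp
  show "integrable M (\<lambda>\<omega>. F (X \<omega>))"
    unfolding e2 by (rule EXP(1)[OF D mF mF i0 i1])
  show "(\<integral>\<omega>. F (X \<omega>) \<partial>M)
          = 1/2 * (\<integral>x. gauss_density mu0 \<sigma> x * F x \<partial>lborel) + 1/2 * (\<integral>x. gauss_density mu1 \<sigma> x * F x \<partial>lborel)"
    unfolding e2 by (rule EXP(2)[OF D mF mF i0 i1])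
qed

lemma vec_nth_meas_raw[measurable (raw)]:
  fixes f :: "'a \<Rightarrow> real^'n"
  assumes "f \<in> borel_measurable M"
  shows "(\<lambda>x. f x $ i) \<in> borel_measurable M"
proof -
  have "(\<lambda>x::real^'n. x $ i) \<in> borel_measurable borel"
    by (intro borel_measurable_continuous_onI continuous_on_component continuous_on_id)
  from measurable_compose[OF assms this] show ?thesis by simp
qed

lemma vec_repr: "(x::real^'n) = (\<Sum>i\<in>UNIV. x$i *\<^sub>R axis i 1)"
  by (simp add: vec_eq_iff axis_def if_distrib cong: if_cong)

lemma integrable_vecI:
  fixes f :: "'a \<Rightarrow> real^'n"
  assumes "\<And>i. integrable M (\<lambda>x. f x $ i)"
  shows "integrable M f"
proof -
  have "integrable M (\<lambda>x. \<Sum>i\<in>UNIV. f x $ i *\<^sub>R axis i 1)"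
    using assms by (intro Bochner_Integration.integrable_sum integrable_scaleR_left) auto
  then show ?thesis by (subst (asm) vec_repr[symmetric])
qed

lemma integral_vec_nth:
  fixes f :: "'a \<Rightarrow> real^'n"
  assumes "integrable M f"
  shows "(integral\<^sup>L M f) $ i = (\<integral>x. f x $ i \<partial>M)"
proof -
  have "(\<integral>x. f x \<bullet> axis i 1 \<partial>M) = integral\<^sup>L M f \<bullet> axis i 1"
    using assms by (rule integral_inner_left)
  then show ?thesis by (simp add: inner_axis)
qed

lemma aux_div: "0 < (a::real) \<Longrightarrow> 0 < b \<Longrightarrow> b / a / b * a = 1" by simp

lemma int_add_c:
  fixes f g :: "'a \<Rightarrow> real"
  assumes "integrable M f" "integrable M g"
  shows "integrable M (\<lambda>x. a * f x + b * g x)" "(\<integral>x. a * f x + b * g x \<partial>M) = a * integral\<^sup>L M f + b * integral\<^sup>L M g"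
proof -
  have i1: "integrable M (\<lambda>x. a * f x)" using assms(1) by (intro integrable_mult_right)
  have i2: "integrable M (\<lambda>x. b * g x)" using assms(2) by (intro integrable_mult_right)
  show "integrable M (\<lambda>x. a * f x + b * g x)" using i1 i2 by (rule Bochner_Integration.integrable_add)
  show "(\<integral>x. a * f x + b * g x \<partial>M) = a * integral\<^sup>L M f + b * integral\<^sup>L M g"
    using Bochner_Integration.integral_add[OF i1 i2] by simp
qed

theorem proposition3:
  fixes M :: "'a measure"
    and X :: "nat \<Rightarrow> 'a \<Rightarrow> real^'d"
    and Z :: "nat \<Rightarrow> 'a \<Rightarrow> bool"
    and L :: nat and \<sigma> lam :: real
    and mu0 mu1 :: "real^'d"
    and c :: bool
  assumes "prob_space M"
    and "CARD('d) \<ge> 2"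
    and "L \<ge> 1" and "\<sigma> > 0" and "lam > 0"
    and "norm mu0 = 1" and "norm mu1 = 1" and "mu0 \<bullet> mu1 = 0"
    and "prob_space.indep_vars M (\<lambda>_. borel \<Otimes>\<^sub>M count_space UNIV)
           (\<lambda>l \<omega>. (X l \<omega>, Z l \<omega>)) {..<L}"
    and "\<forall>l<L. distributed M (lborel \<Otimes>\<^sub>M count_space UNIV)
           (\<lambda>\<omega>. (X l \<omega>, Z l \<omega>)) (mix_density mu0 mu1 \<sigma>)"
  shows "(1 / measure M {\<omega> \<in> space M. Z 0 \<omega> = c}) *\<^sub>R
           (\<integral>\<omega>. indicator {\<omega> \<in> space M. Z 0 \<omega> = c} \<omega> *\<^sub>R
                  T_lin lam mu0 mu1 L (\<lambda>l. X l \<omega>) 0 \<partial>M)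
         = ((lam / real L) * ((real L + 1) + 2 * (real L + 3) * \<sigma>\<^sup>2))
             *\<^sub>R (if c then mu1 else mu0)
       \<and> (lam = real L / ((real L + 1) + 2 * (real L + 3) * \<sigma>\<^sup>2) \<longrightarrow>
           (1 / measure M {\<omega> \<in> space M. Z 0 \<omega> = c}) *\<^sub>R
           (\<integral>\<omega>. indicator {\<omega> \<in> space M. Z 0 \<omega> = c} \<omega> *\<^sub>R
                  T_lin lam mu0 mu1 L (\<lambda>l. X l \<omega>) 0 \<partial>M)
           = (if c then mu1 else mu0))"
proof -
  interpret P: prob_space M by (rule assms(1))
  have s: "0 < \<sigma>" by (rule assms(4))
  have L1: "1 \<le> L" by (rule assms(3))
  have Dl: "\<And>l. l < L \<Longrightarrow> distributed M (lborel \<Otimes>\<^sub>M count_space UNIV) (\<lambda>\<omega>. (X l \<omega>, Z l \<omega>)) (mix_density mu0 mu1 \<sigma>)"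
    using assms(10) by blast
  have D0: "distributed M (lborel \<Otimes>\<^sub>M count_space UNIV) (\<lambda>\<omega>. (X 0 \<omega>, Z 0 \<omega>)) (mix_density mu0 mu1 \<sigma>)"
    using Dl L1 by simp
  have mXZ: "(\<lambda>\<omega>. (X l \<omega>, Z l \<omega>)) \<in> measurable M (borel \<Otimes>\<^sub>M count_space UNIV)" if "l < L" for l
  proof -
    have A: "(\<lambda>\<omega>. (X l \<omega>, Z l \<omega>)) \<in> measurable M (lborel \<Otimes>\<^sub>M count_space UNIV)"
      using distributed_measurable[OF Dl[OF that]] .
    have B: "measurable M (lborel \<Otimes>\<^sub>M count_space UNIV) = measurable M (borel \<Otimes>\<^sub>M (count_space UNIV :: bool measure))"
      by (rule measurable_cong_sets[OF refl sets_pair_measure_cong[OF sets_lborel refl]])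
    show ?thesis using A unfolding B .
  qed
  have mX: "X l \<in> borel_measurable M" if "l < L" for l
    using measurable_compose[OF mXZ[OF that] measurable_fst] by simp
  have mZ: "Z l \<in> measurable M (count_space UNIV)" if "l < L" for l
    using measurable_compose[OF mXZ[OF that] measurable_snd] by simp
  have n00: "mu0 \<bullet> mu0 = 1" using assms(6) by (simp add: power2_norm_eq_inner[symmetric])
  have n11: "mu1 \<bullet> mu1 = 1" using assms(7) by (simp add: power2_norm_eq_inner[symmetric])
  have n01: "mu0 \<bullet> mu1 = 0" by (rule assms(8))
  have n10: "mu1 \<bullet> mu0 = 0" using n01 by (simp add: inner_commute)
  define mc where "mc = (if c then mu1 else mu0)"
  have mc0: "mc \<bullet> mu0 = (if c then 0 else 1)" and mc1: "mc \<bullet> mu1 = (if c then 1 else 0)"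
    by (simp_all add: mc_def n00 n11 n01 n10)
  define S where "S = {\<omega> \<in> space M. Z 0 \<omega> = c}"
  have mZ0[measurable]: "Z 0 \<in> measurable M (count_space UNIV)" using mZ L1 by simp
  have Sev: "S \<in> sets M" unfolding S_def by measurable
  have PS: "measure M S = 1/2"
  proof -
    have "measure M S = (\<integral>\<omega>. indicator S \<omega> \<partial>M)" using Sev by simp
    also have "\<dots> = (\<integral>\<omega>. (if Z 0 \<omega> = c then 1 else 0) * (\<lambda>x. 1) (X 0 \<omega>) \<partial>M)"
      by (intro Bochner_Integration.integral_cong) (auto simp: S_def indicator_def)
    also have "\<dots> = 1/2 * (\<integral>x. gauss_density mc \<sigma> x * 1 \<partial>lborel)"
      unfolding mc_def by (rule EXPc(2)[OF D0]) (simp_all add: G0[OF s])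
    also have "\<dots> = 1/2" by (simp add: G0[OF s])
    finally show ?thesis .
  qed
  have INDEP: "integrable M (\<lambda>\<omega>. A (X 0 \<omega>, Z 0 \<omega>) * B (X k \<omega>, Z k \<omega>)) \<and>
      (\<integral>\<omega>. A (X 0 \<omega>, Z 0 \<omega>) * B (X k \<omega>, Z k \<omega>) \<partial>M) = (\<integral>\<omega>. A (X 0 \<omega>, Z 0 \<omega>) \<partial>M) * (\<integral>\<omega>. B (X k \<omega>, Z k \<omega>) \<partial>M)"
    if k: "0 < k" "k < L" and mA: "A \<in> borel_measurable (borel \<Otimes>\<^sub>M count_space UNIV)"
      and mB: "B \<in> borel_measurable (borel \<Otimes>\<^sub>M count_space UNIV)"
      and iA: "integrable M (\<lambda>\<omega>. A (X 0 \<omega>, Z 0 \<omega>))" and iB: "integrable M (\<lambda>\<omega>. B (X k \<omega>, Z k \<omega>))"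
    for k :: nat and A B :: "(real^'d) \<times> bool \<Rightarrow> real"
  proof -
    define C where "C j = (if j = 0 then A else B)" for j :: nat
    have iv0: "P.indep_vars (\<lambda>_. borel \<Otimes>\<^sub>M count_space UNIV) (\<lambda>l \<omega>. (X l \<omega>, Z l \<omega>)) {0, k}"
      by (rule P.indep_vars_subset[OF assms(9)]) (use k in auto)
    have iv: "P.indep_vars (\<lambda>_. borel) (\<lambda>j \<omega>. C j (X j \<omega>, Z j \<omega>)) {0, k}"
      by (rule P.indep_vars_compose2[OF iv0]) (auto simp: C_def mA mB)
    have ii: "\<And>j. j \<in> {0, k} \<Longrightarrow> integrable M (\<lambda>\<omega>. C j (X j \<omega>, Z j \<omega>))"
      using iA iB k by (auto simp: C_def)
    have pe: "(\<Prod>j\<in>{0, k}. C j (X j \<omega>, Z j \<omega>)) = A (X 0 \<omega>, Z 0 \<omega>) * B (X k \<omega>, Z k \<omega>)" for \<omega>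
      using k by (simp add: C_def)
    have "integrable M (\<lambda>\<omega>. \<Prod>j\<in>{0, k}. C j (X j \<omega>, Z j \<omega>))"
      by (rule P.indep_vars_integrable[OF _ iv ii]) simp
    moreover have "(\<integral>\<omega>. (\<Prod>j\<in>{0, k}. C j (X j \<omega>, Z j \<omega>)) \<partial>M) = (\<Prod>j\<in>{0, k}. \<integral>\<omega>. C j (X j \<omega>, Z j \<omega>) \<partial>M)"
      by (rule P.indep_vars_lebesgue_integral[OF _ iv ii]) simp
    ultimately show ?thesis using k by (simp add: pe C_def)
  qed
  define W where "W \<omega> = indicator S \<omega> *\<^sub>R T_lin lam mu0 mu1 L (\<lambda>l. X l \<omega>) 0" for \<omega>
  define K where "K = (real L + 1) + 2 * (real L + 3) * \<sigma>\<^sup>2"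
  have comp: "integrable M (\<lambda>\<omega>. W \<omega> $ i) \<and> (\<integral>\<omega>. W \<omega> $ i \<partial>M) = 1/2 * (lam / real L * K) * mc $ i" for i
  proof -
    define w where "w k \<omega> = (if Z 0 \<omega> = c then 1 else 0) * (lam * ((X 0 \<omega> \<bullet> mu0) * (X k \<omega> \<bullet> mu0) + (X 0 \<omega> \<bullet> mu1) * (X k \<omega> \<bullet> mu1)) * X k \<omega> $ i)" for k \<omega>
    have Wi: "W \<omega> $ i = 2 / real L * (\<Sum>k<L. w k \<omega>)" if "\<omega> \<in> space M" for \<omega>
      using that by (cases "Z 0 \<omega> = c")
        (simp_all add: W_def T_lin_def w_def S_def indicator_def sum_distrib_left inner_commute[of mu0] inner_commute[of mu1] mult_ac)
    define F0 where "F0 x = lam * ((x \<bullet> mu0) * (x \<bullet> mu0) + (x \<bullet> mu1) * (x \<bullet> mu1)) * x $ i" for x :: "real^'d"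
    have F0eq: "(\<lambda>x. gauss_density \<mu> \<sigma> x * F0 x) = (\<lambda>x. lam * (gauss_density \<mu> \<sigma> x * ((x \<bullet> mu0)^2 * x$i)) + lam * (gauss_density \<mu> \<sigma> x * ((x \<bullet> mu1)^2 * x$i)))" for \<mu>
      by (simp add: fun_eq_iff F0_def power2_eq_square algebra_simps)
    have iF0: "integrable lborel (\<lambda>x. gauss_density \<mu> \<sigma> x * F0 x)" for \<mu>
      unfolding F0eq by (rule int_add_c(1)[OF V3(1)[OF s] V3(1)[OF s]])
    have mF0: "F0 \<in> borel_measurable borel" unfolding F0_def by measurable
    have w0eq: "w 0 = (\<lambda>\<omega>. (if Z 0 \<omega> = c then 1 else 0) * F0 (X 0 \<omega>))" by (simp add: fun_eq_iff w_def F0_def)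
    have Ew0: "integrable M (w 0) \<and> integral\<^sup>L M (w 0) = 1/2 * lam * (1 + 4 * \<sigma>\<^sup>2) * mc $ i"
    proof
      show "integrable M (w 0)" unfolding w0eq by (rule EXPc(1)[OF D0 mF0 iF0 iF0])
      have "integral\<^sup>L M (w 0) = 1/2 * (\<integral>x. gauss_density mc \<sigma> x * F0 x \<partial>lborel)"
        unfolding w0eq mc_def by (rule EXPc(2)[OF D0 mF0 iF0 iF0])
      also have "(\<integral>x. gauss_density mc \<sigma> x * F0 x \<partial>lborel) =
          lam * ((mc \<bullet> mu0)^2 * mc$i + \<sigma>^2 * ((mu0 \<bullet> mu0) * mc$i + 2 * (mc \<bullet> mu0) * mu0$i))
        + lam * ((mc \<bullet> mu1)^2 * mc$i + \<sigma>^2 * ((mu1 \<bullet> mu1) * mc$i + 2 * (mc \<bullet> mu1) * mu1$i))"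
        unfolding F0eq int_add_c(2)[OF V3(1)[OF s] V3(1)[OF s]] V3(2)[OF s] ..
      also have "\<dots> = lam * (1 + 4 * \<sigma>\<^sup>2) * mc $ i"
        by (cases c) (simp_all add: n00 n11 n01 n10 mc_def algebra_simps)
      finally show "integral\<^sup>L M (w 0) = 1/2 * lam * (1 + 4 * \<sigma>\<^sup>2) * mc $ i" by simp
    qed
    have Ewk: "integrable M (w k) \<and> integral\<^sup>L M (w k) = 1/2 * lam * (1/2 + \<sigma>\<^sup>2) * mc $ i"
      if k: "0 < k" "k < L" for k
    proof -
      have Dk: "distributed M (lborel \<Otimes>\<^sub>M count_space UNIV) (\<lambda>\<omega>. (X k \<omega>, Z k \<omega>)) (mix_density mu0 mu1 \<sigma>)"
        using Dl k by simp
      define A where "A u p = (if snd p = c then 1 else 0) * (fst p \<bullet> u)" for u :: "real^'d" and p :: "(real^'d) \<times> bool"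
      define B where "B u p = lam * ((fst p \<bullet> u) * fst p $ i)" for u :: "real^'d" and p :: "(real^'d) \<times> bool"
      have mA: "A u \<in> borel_measurable (borel \<Otimes>\<^sub>M count_space UNIV)" for u unfolding A_def by measurable
      have mB: "B u \<in> borel_measurable (borel \<Otimes>\<^sub>M count_space UNIV)" for u unfolding B_def by measurable
      have mFA: "(\<lambda>x. x \<bullet> u) \<in> borel_measurable (borel :: (real^'d) measure)" for u by measurable
      have mFB: "(\<lambda>x. lam * ((x \<bullet> u) * x $ i)) \<in> borel_measurable (borel :: (real^'d) measure)" for u by measurable
      have iFB: "integrable lborel (\<lambda>x. gauss_density \<mu> \<sigma> x * (lam * ((x \<bullet> u) * x $ i)))" for \<mu> u
      proof -
        have "integrable lborel (\<lambda>x. lam * (gauss_density \<mu> \<sigma> x * ((x \<bullet> u) * x $ i)))"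
          using V2(1)[OF s] by (intro integrable_mult_right)
        then show ?thesis by (simp add: algebra_simps)
      qed
      have intFB: "(\<integral>x. gauss_density \<mu> \<sigma> x * (lam * ((x \<bullet> u) * x $ i)) \<partial>lborel) = lam * ((\<mu> \<bullet> u) * \<mu>$i + \<sigma>^2 * u$i)" for \<mu> u
      proof -
        have "(\<integral>x. gauss_density \<mu> \<sigma> x * (lam * ((x \<bullet> u) * x $ i)) \<partial>lborel) = (\<integral>x. lam * (gauss_density \<mu> \<sigma> x * ((x \<bullet> u) * x $ i)) \<partial>lborel)"
          by (simp add: algebra_simps)
        also have "\<dots> = lam * ((\<mu> \<bullet> u) * \<mu>$i + \<sigma>^2 * u$i)" by (simp add: V2(2)[OF s])
        finally show ?thesis .
      qed
      have iA: "integrable M (\<lambda>\<omega>. A u (X 0 \<omega>, Z 0 \<omega>))" for u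
        unfolding A_def fst_conv snd_conv by (rule EXPc(1)[OF D0 mFA V1(1)[OF s] V1(1)[OF s]])
      have EA: "(\<integral>\<omega>. A u (X 0 \<omega>, Z 0 \<omega>) \<partial>M) = 1/2 * (mc \<bullet> u)" for u
        unfolding A_def fst_conv snd_conv EXPc(2)[OF D0 mFA V1(1)[OF s] V1(1)[OF s]]
        by (simp add: V1(2)[OF s] mc_def)
      have iB: "integrable M (\<lambda>\<omega>. B u (X k \<omega>, Z k \<omega>))" for u
        unfolding B_def fst_conv snd_conv by (rule EXPc(3)[OF Dk mFB iFB iFB])
      have EB: "(\<integral>\<omega>. B u (X k \<omega>, Z k \<omega>) \<partial>M) = 1/2 * (lam * ((mu0 \<bullet> u) * mu0$i + \<sigma>^2 * u$i)) + 1/2 * (lam * ((mu1 \<bullet> u) * mu1$i + \<sigma>^2 * u$i))" for u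
        unfolding B_def fst_conv snd_conv EXPc(4)[OF Dk mFB iFB iFB] intFB ..
      have wk: "w k = (\<lambda>\<omega>. A mu0 (X 0 \<omega>, Z 0 \<omega>) * B mu0 (X k \<omega>, Z k \<omega>) + A mu1 (X 0 \<omega>, Z 0 \<omega>) * B mu1 (X k \<omega>, Z k \<omega>))"
        by (simp add: fun_eq_iff w_def A_def B_def algebra_simps)
      note I0 = INDEP[OF k mA[of mu0] mB[of mu0] iA iB] and I1 = INDEP[OF k mA[of mu1] mB[of mu1] iA iB]
      have "integrable M (w k)" unfolding wk using I0 I1 by (intro Bochner_Integration.integrable_add) auto
      moreover have "integral\<^sup>L M (w k) = 1/2 * lam * (1/2 + \<sigma>\<^sup>2) * mc $ i"
      proof -
        have "integral\<^sup>L M (w k) = (\<integral>\<omega>. A mu0 (X 0 \<omega>, Z 0 \<omega>) * B mu0 (X k \<omega>, Z k \<omega>) \<partial>M) + (\<integral>\<omega>. A mu1 (X 0 \<omega>, Z 0 \<omega>) * B mu1 (X k \<omega>, Z k \<omega>) \<partial>M)"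
          unfolding wk using I0 I1 by (intro Bochner_Integration.integral_add) auto
        also have "\<dots> = 1/2 * lam * (1/2 + \<sigma>\<^sup>2) * mc $ i"
          using I0 I1 by (cases c) (simp_all add: EA EB mc_def n00 n11 n01 n10 algebra_simps)
        finally show ?thesis .
      qed
      ultimately show ?thesis by simp
    qed
    obtain m where Lm: "L = Suc m" using L1 by (cases L) auto
    have iw: "integrable M (w k)" if "k < L" for k
      using Ew0 Ewk that by (cases "k = 0") auto
    have iW: "integrable M (\<lambda>\<omega>. 2 / real L * (\<Sum>k<L. w k \<omega>))"
      using iw by (intro integrable_mult_right Bochner_Integration.integrable_sum) auto
    have "integrable M (\<lambda>\<omega>. W \<omega> $ i)"
      using iW by (subst Bochner_Integration.integrable_cong[OF refl Wi]) auto
    moreover have "(\<integral>\<omega>. W \<omega> $ i \<partial>M) = 1/2 * (lam / real L * K) * mc $ i"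
    proof -
      have "(\<integral>\<omega>. W \<omega> $ i \<partial>M) = (\<integral>\<omega>. 2 / real L * (\<Sum>k<L. w k \<omega>) \<partial>M)"
        by (rule Bochner_Integration.integral_cong[OF refl Wi])
      also have "\<dots> = 2 / real L * (\<Sum>k<L. integral\<^sup>L M (w k))"
        using iw by (simp add: Bochner_Integration.integral_sum)
      also have "(\<Sum>k<L. integral\<^sup>L M (w k)) = integral\<^sup>L M (w 0) + (\<Sum>k<m. integral\<^sup>L M (w (Suc k)))"
        unfolding Lm by (rule sum.lessThan_Suc_shift)
      also have "(\<Sum>k<m. integral\<^sup>L M (w (Suc k))) = (\<Sum>k<m. 1/2 * lam * (1/2 + \<sigma>\<^sup>2) * mc $ i)"
        using Ewk Lm by (intro sum.cong) auto
      also have "2 / real L * (integral\<^sup>L M (w 0) + (\<Sum>k<m. 1/2 * lam * (1/2 + \<sigma>\<^sup>2) * mc $ i))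
           = 1/2 * (lam / real L * K) * mc $ i"
        unfolding K_def Lm conjunct2[OF Ew0] by (simp add: field_simps)
      finally show ?thesis .
    qed
    ultimately show ?thesis ..
  qed
  have intW: "integrable M W"
    by (rule integrable_vecI) (use comp in blast)
  have res: "(1 / measure M S) *\<^sub>R integral\<^sup>L M W = ((lam / real L) * K) *\<^sub>R mc"
    by (simp add: vec_eq_iff integral_vec_nth[OF intW] comp PS)
  have res': "(1 / measure M {\<omega> \<in> space M. Z 0 \<omega> = c}) *\<^sub>R
           (\<integral>\<omega>. indicator {\<omega> \<in> space M. Z 0 \<omega> = c} \<omega> *\<^sub>R
                  T_lin lam mu0 mu1 L (\<lambda>l. X l \<omega>) 0 \<partial>M)
         = ((lam / real L) * ((real L + 1) + 2 * (real L + 3) * \<sigma>\<^sup>2))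
             *\<^sub>R (if c then mu1 else mu0)"
    using res unfolding S_def W_def K_def mc_def .
  have "0 < L" using L1 by arith
  then have Lpos: "0 < real L" by simp
  have Kpos: "0 < (real L + 1) + 2 * (real L + 3) * \<sigma>\<^sup>2"
    using Lpos by (intro add_pos_nonneg) auto
  show ?thesis
  proof
    show "(1 / measure M {\<omega> \<in> space M. Z 0 \<omega> = c}) *\<^sub>R
           (\<integral>\<omega>. indicator {\<omega> \<in> space M. Z 0 \<omega> = c} \<omega> *\<^sub>R
                  T_lin lam mu0 mu1 L (\<lambda>l. X l \<omega>) 0 \<partial>M)
         = ((lam / real L) * ((real L + 1) + 2 * (real L + 3) * \<sigma>\<^sup>2))
             *\<^sub>R (if c then mu1 else mu0)" by (rule res')
    show "lam = real L / ((real L + 1) + 2 * (real L + 3) * \<sigma>\<^sup>2) \<longrightarrow>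
           (1 / measure M {\<omega> \<in> space M. Z 0 \<omega> = c}) *\<^sub>R
           (\<integral>\<omega>. indicator {\<omega> \<in> space M. Z 0 \<omega> = c} \<omega> *\<^sub>R
                  T_lin lam mu0 mu1 L (\<lambda>l. X l \<omega>) 0 \<partial>M)
           = (if c then mu1 else mu0)"
    proof
      assume lam: "lam = real L / ((real L + 1) + 2 * (real L + 3) * \<sigma>\<^sup>2)"
      have "(lam / real L) * ((real L + 1) + 2 * (real L + 3) * \<sigma>\<^sup>2) = 1"
        unfolding lam by (rule aux_div[OF Kpos Lpos])
      then show "(1 / measure M {\<omega> \<in> space M. Z 0 \<omega> = c}) *\<^sub>R
           (\<integral>\<omega>. indicator {\<omega> \<in> space M. Z 0 \<omega> = c} \<omega> *\<^sub>R
                  T_lin lam mu0 mu1 L (\<lambda>l. X l \<omega>) 0 \<partial>M)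
           = (if c then mu1 else mu0)" using res' by simp
    qed
  qed
qed

end
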